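(* There exists a family of MDPs $(\mathcal{M}_n)_{n\ge1}$ such that for each $n$ there are a trace $\tau$ and a state-risk function $r$ of $\mathcal{M}_n$ such that, with $B:=V(\mathsf{est}_{\mathsf{MDP}}(\tau))$, we have $|B|=2^n$, and for every $\mathsf{bel}\in B$ there exists $\tau'\in\mathsf{Z}^+$ with $R_r(\tau\cdot\tau')>\sup_{\mathsf{bel}''\in B'}\sum_{s}\mathsf{bel}''(s)\cdot r(s)$, where $B'=\mathsf{est}^{\mathsf{up}}(B\setminus\{\mathsf{bel}\},\tau')$.
   Context: An MDP is a tuple $\langle S,\iota,\mathsf{Act},P,\mathsf{Z},\mathsf{obs}\rangle$: finite state set $S$, initial distribution $\iota\in\mathsf{Distr}(S)$, finite action set $\mathsf{Act}$, partial transition function $P\colon S\times\mathsf{Act}\rightharpoonup\mathsf{Distr}(S)$ (write $P(s,\alpha,s')=P(s,\alpha)(s')$), finite observation set $\mathsf{Z}$, observation function $\mathsf{obs}\colon S\to\mathsf{Distr}(\mathsf{Z})$; $\mathsf{AvAct}(s)=\{\alpha\mid P(s,\alpha)\text{ defined}\}\neq\emptyset$. A finite path is $\pi=s_0a_0\dots a_{n-1}s_n$ with $\iota(s_0)>0$, $P(s_i,a_i)(s_{i+1})>0$; $\mathrm{last}(\pi)=s_n$. A scheduler $\sigma$ maps each finite path $\pi$ to a distribution on $\mathsf{AvAct}(\mathrm{last}(\pi))$; $\Sigma$ is the set of schedulers; $\Pr^\sigma(\pi)=\iota(s_0)\prod_{i<n}\sigma(s_0a_0\dots s_i)(a_i)P(s_i,a_i)(s_{i+1})$.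 For a trace $\tau=z_0\dots z_n$ and path $\pi=s_0\dots s_m$, $\Pr(\tau\mid\pi)=\prod_{i=0}^n\mathsf{obs}(s_i)(z_i)$ if $m=n$, else $0$; $\mathrm{Paths}(\tau)$ are the paths with as many states as $\tau$ has observations; $\Pr^\sigma(\tau)=\sum_\pi\Pr^\sigma(\pi)\Pr(\tau\mid\pi)$; $\Pr^\sigma(\pi\mid\tau)=\Pr(\tau\mid\pi)\Pr^\sigma(\pi)/\Pr^\sigma(\tau)$ ($0/0=0$). For $r\colon S\to\mathbb{R}_{\ge0}$, $R_r(\tau)=\sup_{\sigma\in\Sigma}\sum_{\pi\in\mathrm{Paths}(\tau)}\Pr^\sigma(\pi\mid\tau)r(\mathrm{last}(\pi))$. Beliefs: $\mathsf{Bel}=\mathsf{Distr}(S)\cup\{\mathbf{0}\}$ in $\mathbb{R}^S$. For $\mathsf{bel}\in\mathsf{Bel}$, $z\in\mathsf{Z}$: $\mathsf{bel}'\in\mathsf{est}^{\mathsf{up}}(\mathsf{bel},z)$ iff there is $\varsigma\colon S\to\mathsf{Distr}(\mathsf{Act})$ with $\varsigma(s)$ supported in $\mathsf{AvAct}(s)$ and $\mathsf{bel}'(s')=\dfrac{\sum_s\mathsf{bel}(s)\sum_\alpha\varsigma(s)(\alpha)P(s,\alpha,s')\mathsf{obs}(s')(z)}{\sum_s\mathsf{bel}(s)\sum_\alpha\varsigma(s)(\alpha)\sum_{\hat s}P(s,\alpha,\hat s)\mathsf{obs}(\hat s)(z)}$ ($0/0=0$); for sets, $\mathsf{est}^{\mathsf{up}}(B,z)=\bigcup_{\mathsf{bel}\in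 B}\mathsf{est}^{\mathsf{up}}(\mathsf{bel},z)$, and for traces $\mathsf{est}^{\mathsf{up}}(B,z\cdot\tau'')=\mathsf{est}^{\mathsf{up}}(\mathsf{est}^{\mathsf{up}}(B,z),\tau'')$. $\mathsf{est}_{\mathsf{MDP}}(z)=\{b_z\}$ with $b_z(s)=\iota(s)\mathsf{obs}(s)(z)/\sum_{\hat s}\iota(\hat s)\mathsf{obs}(\hat s)(z)$ (or $\mathbf{0}$ if the denominator is $0$), $\mathsf{est}_{\mathsf{MDP}}(\tau\cdot z)=\mathsf{est}^{\mathsf{up}}(\mathsf{est}_{\mathsf{MDP}}(\tau),z)$. $V(B)$ is the set of elements of $B$ that are not convex combinations of other elements of $B$. *)

theory Defs
  imports Complex_Main
begin

text \<open>States, actions and observations are encoded as natural numbers; each MDP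
carries explicit finite carrier sets for them, so that a family of MDPs with
different state spaces can be expressed.\<close>

record mdp =
  St   :: "nat set"
  init :: "nat \<Rightarrow> real"
  Act  :: "nat set"
  P    :: "nat \<Rightarrow> nat \<Rightarrow> (nat \<Rightarrow> real) option"
  Obs  :: "nat set"
  obs  :: "nat \<Rightarrow> nat \<Rightarrow> real"

definition is_distr :: "nat set \<Rightarrow> (nat \<Rightarrow> real) \<Rightarrow> bool" where
  "is_distr A d \<longleftrightarrow> (\<forall>x. d x \<ge> 0) \<and> (\<forall>x. x \<notin> A \<longrightarrow> d x = 0) \<and> (\<Sum>x\<in>A. d x) = 1"

definition AvAct :: "mdp \<Rightarrow> nat \<Rightarrow> nat set" where
  "AvAct M s = {a \<in> Act M. P M s a \<noteq> None}"

definition Ptr :: "mdp \<Rightarrow> nat \<Rightarrow> nat \<Rightarrow> nat \<Rightarrow> real" where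
  "Ptr M s a s' = (case P M s a of None \<Rightarrow> 0 | Some d \<Rightarrow> d s')"

definition is_mdp :: "mdp \<Rightarrow> bool" where
  "is_mdp M \<longleftrightarrow> finite (St M) \<and> St M \<noteq> {} \<and> finite (Act M) \<and> finite (Obs M)
     \<and> is_distr (St M) (init M)
     \<and> (\<forall>s a. (s \<notin> St M \<or> a \<notin> Act M) \<longrightarrow> P M s a = None)
     \<and> (\<forall>s\<in>St M. \<forall>a d. P M s a = Some d \<longrightarrow> is_distr (St M) d)
     \<and> (\<forall>s\<in>St M. AvAct M s \<noteq> {})
     \<and> (\<forall>s\<in>St M. is_distr (Obs M) (obs M s))"

text \<open>A finite path \<open>s0 a0 ... a(n-1) sn\<close> is the pair of the state list
\<open>[s0,...,sn]\<close> and the action list \<open>[a0,...,a(n-1)]\<close>.\<close>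

definition is_path :: "mdp \<Rightarrow> nat list \<Rightarrow> nat list \<Rightarrow> bool" where
  "is_path M ss as \<longleftrightarrow> ss \<noteq> [] \<and> length as = length ss - 1 \<and> set ss \<subseteq> St M
     \<and> init M (ss ! 0) > 0
     \<and> (\<forall>i < length as. P M (ss ! i) (as ! i) \<noteq> None \<and> Ptr M (ss ! i) (as ! i) (ss ! Suc i) > 0)"

definition is_scheduler :: "mdp \<Rightarrow> (nat list \<Rightarrow> nat list \<Rightarrow> nat \<Rightarrow> real) \<Rightarrow> bool" where
  "is_scheduler M \<sigma> \<longleftrightarrow> (\<forall>ss as. is_path M ss as \<longrightarrow> is_distr (AvAct M (last ss)) (\<sigma> ss as))"

definition path_prob :: "mdp \<Rightarrow> (nat list \<Rightarrow> nat list \<Rightarrow> nat \<Rightarrow> real) \<Rightarrow> nat list \<Rightarrow> nat list \<Rightarrow> real" where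
  "path_prob M \<sigma> ss as = init M (ss ! 0) *
     (\<Prod>i<length as. \<sigma> (take (Suc i) ss) (take i as) (as ! i) * Ptr M (ss ! i) (as ! i) (ss ! Suc i))"

definition trace_given_path :: "mdp \<Rightarrow> nat list \<Rightarrow> nat list \<Rightarrow> real" where
  "trace_given_path M \<tau> ss = (if length ss = length \<tau> then (\<Prod>i<length \<tau>. obs M (ss ! i) (\<tau> ! i)) else 0)"

definition Paths :: "mdp \<Rightarrow> nat list \<Rightarrow> (nat list \<times> nat list) set" where
  "Paths M \<tau> = {(ss, as). is_path M ss as \<and> length ss = length \<tau>}"

definition trace_prob :: "mdp \<Rightarrow> (nat list \<Rightarrow> nat list \<Rightarrow> nat \<Rightarrow> real) \<Rightarrow> nat list \<Rightarrow> real" where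
  "trace_prob M \<sigma> \<tau> = (\<Sum>(ss, as)\<in>Paths M \<tau>. path_prob M \<sigma> ss as * trace_given_path M \<tau> ss)"

text \<open>Posterior; note that in Isabelle \<open>x / 0 = 0\<close>, matching the convention \<open>0/0 = 0\<close>.\<close>

definition path_given_trace :: "mdp \<Rightarrow> (nat list \<Rightarrow> nat list \<Rightarrow> nat \<Rightarrow> real) \<Rightarrow> nat list \<Rightarrow> nat list \<Rightarrow> nat list \<Rightarrow> real" where
  "path_given_trace M \<sigma> ss as \<tau> = trace_given_path M \<tau> ss * path_prob M \<sigma> ss as / trace_prob M \<sigma> \<tau>"

definition Risk :: "mdp \<Rightarrow> (nat \<Rightarrow> real) \<Rightarrow> nat list \<Rightarrow> real" where
  "Risk M r \<tau> = (SUP \<sigma> \<in> {\<sigma>. is_scheduler M \<sigma>}.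
      \<Sum>(ss, as)\<in>Paths M \<tau>. path_given_trace M \<sigma> ss as \<tau> * r (last ss))"

text \<open>Beliefs are functions \<open>nat \<Rightarrow> real\<close> vanishing outside the state set.\<close>

definition est_up :: "mdp \<Rightarrow> (nat \<Rightarrow> real) \<Rightarrow> nat \<Rightarrow> (nat \<Rightarrow> real) set" where
  "est_up M bel z = {bel'. \<exists>sch :: nat \<Rightarrow> nat \<Rightarrow> real.
      (\<forall>s\<in>St M. is_distr (AvAct M s) (sch s)) \<and>
      bel' = (\<lambda>s'. if s' \<in> St M then
          (\<Sum>s\<in>St M. bel s * (\<Sum>\<alpha>\<in>Act M. sch s \<alpha> * Ptr M s \<alpha> s' * obs M s' z)) /
          (\<Sum>s\<in>St M. bel s * (\<Sum>\<alpha>\<in>Act M. sch s \<alpha> * (\<Sum>s''\<in>St M. Ptr M s \<alpha> s'' * obs M s'' z)))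
        else 0)}"

definition est_up_set :: "mdp \<Rightarrow> (nat \<Rightarrow> real) set \<Rightarrow> nat \<Rightarrow> (nat \<Rightarrow> real) set" where
  "est_up_set M B z = (\<Union>bel\<in>B. est_up M bel z)"

definition est_up_trace :: "mdp \<Rightarrow> (nat \<Rightarrow> real) set \<Rightarrow> nat list \<Rightarrow> (nat \<Rightarrow> real) set" where
  "est_up_trace M B zs = fold (\<lambda>z B'. est_up_set M B' z) zs B"

definition init_bel :: "mdp \<Rightarrow> nat \<Rightarrow> (nat \<Rightarrow> real)" where
  "init_bel M z = (\<lambda>s. if s \<in> St M then init M s * obs M s z / (\<Sum>s'\<in>St M. init M s' * obs M s' z) else 0)"

text \<open>\<open>est_MDP(z \<cdot> zs) = est_up({b_z}, zs)\<close>, which unfolds the paper's recursion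
\<open>est_MDP(\<tau> \<cdot> z) = est_up(est_MDP(\<tau>), z)\<close>; only nonempty traces are used.\<close>

fun est_MDP :: "mdp \<Rightarrow> nat list \<Rightarrow> (nat \<Rightarrow> real) set" where
  "est_MDP M [] = {}"
| "est_MDP M (z # zs) = est_up_trace M {init_bel M z} zs"

definition convex_comb_of :: "(nat \<Rightarrow> real) set \<Rightarrow> (nat \<Rightarrow> real) \<Rightarrow> bool" where
  "convex_comb_of A b \<longleftrightarrow> (\<exists>F u. finite F \<and> F \<noteq> {} \<and> F \<subseteq> A \<and> (\<forall>x\<in>F. u x \<ge> (0::real))
        \<and> (\<Sum>x\<in>F. u x) = 1 \<and> b = (\<lambda>s. \<Sum>x\<in>F. u x * x s))"

definition Vert :: "(nat \<Rightarrow> real) set \<Rightarrow> (nat \<Rightarrow> real) set" where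
  "Vert B = {b \<in> B. \<not> convex_comb_of (B - {b}) b}"

definition exp_risk :: "mdp \<Rightarrow> (nat \<Rightarrow> real) \<Rightarrow> (nat \<Rightarrow> real) \<Rightarrow> real" where
  "exp_risk M r b = (\<Sum>s\<in>St M. b s * r s)"

end

theory Submission
  imports Defs "HOL-Library.Nat_Bijection"
begin

lemma path_prefix:
  assumes "is_path M ss as" "i < length as"
  shows "is_path M (take (Suc i) ss) (take i as)"
  using assms unfolding is_path_def
  by (auto simp: nth_take dest: in_set_takeD)

lemma finite_Paths:
  assumes "is_mdp M"
  shows "finite (Paths M \<tau>)"
proof -
  have "Paths M \<tau> \<subseteq> {ss. set ss \<subseteq> St M \<and> length ss = length \<tau>} \<times> {as. set as \<subseteq> Act M \<and> length as = length \<tau> - 1}"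
  proof
    fix p assume "p \<in> Paths M \<tau>"
    then obtain ss as where p: "p = (ss, as)" "is_path M ss as" "length ss = length \<tau>"
      unfolding Paths_def by auto
    have "set as \<subseteq> Act M"
    proof
      fix a assume "a \<in> set as"
      then obtain i where i: "i < length as" "a = as ! i" by (auto simp: in_set_conv_nth)
      then have "P M (ss ! i) a \<noteq> None" using p(2) unfolding is_path_def by auto
      then show "a \<in> Act M" using assms unfolding is_mdp_def by metis
    qed
    then show "p \<in> {ss. set ss \<subseteq> St M \<and> length ss = length \<tau>} \<times> {as. set as \<subseteq> Act M \<and> length as = length \<tau> - 1}"
      using p unfolding is_path_def by auto
  qed
  moreover have "finite ({ss. set ss \<subseteq> St M \<and> length ss = length \<tau>} \<times> {as. set as \<subseteq> Act M \<and> length as = length \<tau> - 1})"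
    using assms unfolding is_mdp_def by (intro finite_cartesian_product finite_lists_length_eq) auto
  ultimately show ?thesis by (rule finite_subset)
qed

lemma weights_nonneg:
  assumes "is_mdp M" "is_scheduler M \<sigma>" "(ss, as) \<in> Paths M \<tau>"
  shows "0 \<le> path_prob M \<sigma> ss as" "0 \<le> trace_given_path M \<tau> ss"
proof -
  have pa: "is_path M ss as" and len: "length ss = length \<tau>" using assms(3) unfolding Paths_def by auto
  have "0 \<le> init M (ss ! 0)" using assms(1) unfolding is_mdp_def is_distr_def by auto
  moreover have "0 \<le> \<sigma> (take (Suc i) ss) (take i as) (as ! i) * Ptr M (ss ! i) (as ! i) (ss ! Suc i)"
    if "i < length as" for i
  proof -
    have "is_path M (take (Suc i) ss) (take i as)" using path_prefix[OF pa that] .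
    then have "is_distr (AvAct M (last (take (Suc i) ss))) (\<sigma> (take (Suc i) ss) (take i as))"
      using assms(2) unfolding is_scheduler_def by auto
    then have "0 \<le> \<sigma> (take (Suc i) ss) (take i as) (as ! i)" unfolding is_distr_def by auto
    moreover have "0 < Ptr M (ss ! i) (as ! i) (ss ! Suc i)" using pa that unfolding is_path_def by auto
    ultimately show ?thesis by simp
  qed
  moreover have "0 \<le> (\<Prod>i<length as. \<sigma> (take (Suc i) ss) (take i as) (as ! i) * Ptr M (ss ! i) (as ! i) (ss ! Suc i))"
    by (rule prod_nonneg) (use calculation in auto)
  ultimately show "0 \<le> path_prob M \<sigma> ss as" unfolding path_prob_def
    by simp
  have "0 \<le> obs M (ss ! i) (\<tau> ! i)" if "i < length \<tau>" for i
  proof -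
    have "ss ! i \<in> St M" using pa that len unfolding is_path_def by (metis nth_mem subsetD)
    then show ?thesis using assms(1) unfolding is_mdp_def is_distr_def by auto
  qed
  then show "0 \<le> trace_given_path M \<tau> ss" unfolding trace_given_path_def
    by (auto intro: prod_nonneg)
qed

lemma value_le1:
  assumes "is_mdp M" "\<forall>s\<in>St M. 0 \<le> r s \<and> r s \<le> 1" "is_scheduler M \<sigma>"
  shows "(\<Sum>(ss, as)\<in>Paths M \<tau>. path_given_trace M \<sigma> ss as \<tau> * r (last ss)) \<le> 1"
proof -
  let ?T = "trace_prob M \<sigma> \<tau>"
  have T0: "0 \<le> ?T" unfolding trace_prob_def
    using weights_nonneg[OF assms(1,3)] by (intro sum_nonneg) (auto intro: mult_nonneg_nonneg)
  have "(\<Sum>(ss, as)\<in>Paths M \<tau>. path_given_trace M \<sigma> ss as \<tau> * r (last ss))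
      \<le> (\<Sum>(ss, as)\<in>Paths M \<tau>. path_given_trace M \<sigma> ss as \<tau>)"
  proof (rule sum_mono)
    fix p assume p: "p \<in> Paths M \<tau>"
    obtain ss as where pp: "p = (ss, as)" by fastforce
    have pa: "is_path M ss as" using p pp unfolding Paths_def by auto
    then have "last ss \<in> St M" unfolding is_path_def by auto
    then have "r (last ss) \<le> 1" using assms(2) by auto
    moreover have "0 \<le> path_given_trace M \<sigma> ss as \<tau>" unfolding path_given_trace_def
      using weights_nonneg[OF assms(1,3), of ss as \<tau>] p pp T0 by auto
    ultimately show "(case p of (ss, as) \<Rightarrow> path_given_trace M \<sigma> ss as \<tau> * r (last ss))
         \<le> (case p of (ss, as) \<Rightarrow> path_given_trace M \<sigma> ss as \<tau>)"
      using pp by (simp add: mult_left_le)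
  qed
  also have "\<dots> = (\<Sum>(ss, as)\<in>Paths M \<tau>. path_prob M \<sigma> ss as * trace_given_path M \<tau> ss) / ?T"
    unfolding sum_divide_distrib path_given_trace_def
    by (intro sum.cong refl) (auto simp: mult.commute split: prod.splits)
  also have "\<dots> = ?T / ?T" unfolding trace_prob_def by simp
  also have "\<dots> \<le> 1" by (simp add: divide_le_eq_1)
  finally show ?thesis .
qed

lemma value_eq1:
  assumes "is_mdp M" "is_scheduler M \<sigma>"
    and good: "\<forall>(ss, as)\<in>Paths M \<tau>. path_prob M \<sigma> ss as * trace_given_path M \<tau> ss * r (last ss)
       = path_prob M \<sigma> ss as * trace_given_path M \<tau> ss"
    and pos: "0 < trace_prob M \<sigma> \<tau>"
  shows "(\<Sum>(ss, as)\<in>Paths M \<tau>. path_given_trace M \<sigma> ss as \<tau> * r (last ss)) = 1"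
proof -
  let ?T = "trace_prob M \<sigma> \<tau>"
  have "(\<Sum>(ss, as)\<in>Paths M \<tau>. path_given_trace M \<sigma> ss as \<tau> * r (last ss))
      = (\<Sum>(ss, as)\<in>Paths M \<tau>. path_prob M \<sigma> ss as * trace_given_path M \<tau> ss) / ?T"
    unfolding sum_divide_distrib path_given_trace_def
    by (intro sum.cong refl) (use good pos in \<open>auto simp: field_simps split: prod.splits\<close>)
  also have "\<dots> = ?T / ?T" unfolding trace_prob_def by simp
  also have "\<dots> = 1" using pos by simp
  finally show ?thesis .
qed

lemma Risk_ge1:
  assumes "is_mdp M" "\<forall>s\<in>St M. 0 \<le> r s \<and> r s \<le> 1" "is_scheduler M \<sigma>"
    and good: "\<forall>(ss, as)\<in>Paths M \<tau>. path_prob M \<sigma> ss as * trace_given_path M \<tau> ss * r (last ss)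
       = path_prob M \<sigma> ss as * trace_given_path M \<tau> ss"
    and pos: "0 < trace_prob M \<sigma> \<tau>"
  shows "1 \<le> Risk M r \<tau>"
proof -
  have "1 = (\<Sum>(ss, as)\<in>Paths M \<tau>. path_given_trace M \<sigma> ss as \<tau> * r (last ss))"
    using value_eq1[OF assms(1,3) good pos] by simp
  also have "\<dots> \<le> Risk M r \<tau>" unfolding Risk_def
    by (rule cSUP_upper) (use assms(3) value_le1[OF assms(1,2)] in \<open>auto intro!: bdd_aboveI2\<close>)
  finally show ?thesis .
qed



definition pe :: "nat \<Rightarrow> nat \<Rightarrow> nat" where "pe i k = prod_encode (i, k)"
definition si :: "nat \<Rightarrow> nat" where "si s = fst (prod_decode s)"
definition sk :: "nat \<Rightarrow> nat" where "sk s = snd (prod_decode s)"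

lemma si_pe[simp]: "si (pe i k) = i" and sk_pe[simp]: "sk (pe i k) = k"
  by (simp_all add: si_def sk_def pe_def)

lemma pe_si_sk[simp]: "pe (si s) (sk s) = s"
  by (simp add: si_def sk_def pe_def)

lemma pe_eq_iff[simp]: "pe i k = pe j l \<longleftrightarrow> i = j \<and> k = l"
  by (metis si_pe sk_pe)

definition stset :: "nat \<Rightarrow> nat set" where "stset n = {s. si s < n \<and> sk s < 5}"

lemma pe_in_stset[simp]: "pe i k \<in> stset n \<longleftrightarrow> i < n \<and> k < 5"
  by (simp add: stset_def)

lemma stset_image: "stset n = (\<lambda>(i, k). pe i k) ` ({..<n} \<times> {..<5})"
proof
  show "stset n \<subseteq> (\<lambda>(i, k). pe i k) ` ({..<n} \<times> {..<5})"
  proof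
    fix s assume "s \<in> stset n"
    then show "s \<in> (\<lambda>(i, k). pe i k) ` ({..<n} \<times> {..<5})"
      by (intro image_eqI[of _ _ "(si s, sk s)"]) (auto simp: stset_def)
  qed
qed auto

lemma finite_stset[simp]: "finite (stset n)"
  unfolding stset_image by auto

lemma sum_stset: "(\<Sum>s\<in>stset n. f s) = (\<Sum>i<n. f (pe i 0) + f (pe i 1) + f (pe i 2) + f (pe i 3) + f (pe i 4))"
proof -
  have inj: "inj_on (\<lambda>(i, k). pe i k) ({..<n} \<times> {..<5::nat})"
    by (auto simp: inj_on_def)
  have "(\<Sum>s\<in>stset n. f s) = (\<Sum>(i, k)\<in>{..<n} \<times> {..<5::nat}. f (pe i k))"
    unfolding stset_image by (subst sum.reindex[OF inj]) (simp add: case_prod_beta)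
  also have "\<dots> = (\<Sum>i<n. \<Sum>k<5. f (pe i k))"
    by (simp add: sum.cartesian_product)
  also have "\<dots> = (\<Sum>i<n. f (pe i 0) + f (pe i 1) + f (pe i 2) + f (pe i 3) + f (pe i 4))"
    by (simp add: numeral_eq_Suc add.assoc)
  finally show ?thesis .
qed

definition code :: "nat set \<Rightarrow> nat" where "code S = Suc (set_encode S)"
definition codes :: "nat \<Rightarrow> nat set" where "codes n = code ` Pow {..<n}"

lemma code_inj: "S \<subseteq> {..<n} \<Longrightarrow> T \<subseteq> {..<n} \<Longrightarrow> code S = code T \<longleftrightarrow> S = T"
  using finite_subset[of S "{..<n}"] finite_subset[of T "{..<n}"] by (simp add: code_def set_encode_eq)

definition dec :: "nat \<Rightarrow> nat set" where "dec z = set_decode (z - 1)"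

lemma code_nz[simp]: "code S \<noteq> 0" by (simp add: code_def)

lemma decode_code[simp]: "S \<subseteq> {..<n} \<Longrightarrow> dec (code S) = S"
  unfolding dec_def
  using finite_subset[of S "{..<n}"] by (simp add: code_def)

lemma zero_notin_codes[simp]: "0 \<notin> codes n"
  by (auto simp: codes_def code_def)

definition Ptrans :: "nat \<Rightarrow> nat \<Rightarrow> nat \<Rightarrow> (nat \<Rightarrow> real) option" where
  "Ptrans n s a = (if s \<in> stset n \<and> a \<in> {0,1} then
     (if sk s = 0 then Some (\<lambda>t. if t = pe (si s) (1 + 2*a) \<or> t = pe (si s) (2 + 2*a) then 1/2 else 0)
      else if a = 0 then Some (\<lambda>t. if t = s then 1 else 0) else None) else None)"

definition obsf :: "nat \<Rightarrow> nat \<Rightarrow> nat \<Rightarrow> real" where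
  "obsf n s z = (if sk s = 0 then (if z = 0 then 1 else 0) else if z = 0 then 1/2
     else if z \<in> codes n \<and> (((si s \<in> dec z) = (3 \<le> sk s)) = even (sk s)) then 1/2^n else 0)"

definition initf :: "nat \<Rightarrow> nat \<Rightarrow> real" where
  "initf n s = (if s \<in> stset n \<and> sk s = 0 then 1/n else 0)"

definition MM :: "nat \<Rightarrow> mdp" where
  "MM n = \<lparr>St = stset n, init = initf n, Act = {0,1}, P = Ptrans n, Obs = insert 0 (codes n), obs = obsf n\<rparr>"

lemma MM_simps[simp]: "St (MM n) = stset n" "init (MM n) = initf n" "Act (MM n) = {0,1}"
  "P (MM n) = Ptrans n" "Obs (MM n) = insert 0 (codes n)" "obs (MM n) = obsf n"
  by (simp_all add: MM_def)

lemma Ptr_start: "Ptr (MM n) (pe i 0) a t = (if i < n \<and> a \<in> {0,1} \<and> (t = pe i (1 + 2*a) \<or> t = pe i (2 + 2*a)) then 1/2 else 0)"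
  by (simp add: Ptr_def Ptrans_def)

lemma Ptr_other: "k \<noteq> 0 \<Longrightarrow> Ptr (MM n) (pe i k) a t = (if i < n \<and> k < 5 \<and> a = 0 \<and> t = pe i k then 1 else 0)"
  by (simp add: Ptr_def Ptrans_def)

lemma AvAct_MM: "AvAct (MM n) s = (if s \<in> stset n then (if sk s = 0 then {0,1} else {0}) else {})"
  by (auto simp: AvAct_def Ptrans_def)

lemma card_Pow_mem:
  assumes "finite A" "i \<in> A"
  shows "card {S \<in> Pow A. (i \<in> S) = g} = 2 ^ (card A - 1)"
proof (cases g)
  case True
  have "{S \<in> Pow A. (i \<in> S) = g} = insert i ` Pow (A - {i})"
  proof
    show "{S \<in> Pow A. (i \<in> S) = g} \<subseteq> insert i ` Pow (A - {i})"
    proof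
      fix S assume "S \<in> {S \<in> Pow A. (i \<in> S) = g}"
      then show "S \<in> insert i ` Pow (A - {i})" using True
        by (intro image_eqI[of _ _ "S - {i}"]) auto
    qed
  qed (use True assms in auto)
  moreover have "inj_on (insert i) (Pow (A - {i}))"
    by (auto simp: inj_on_def)
  ultimately show ?thesis using assms by (simp add: card_image card_Pow card_Diff_singleton)
next
  case False
  have "{S \<in> Pow A. (i \<in> S) = g} = Pow (A - {i})" using False by auto
  then show ?thesis using assms by (simp add: card_Pow card_Diff_singleton)
qed

lemma sum_Pow_mem:
  assumes "finite A" "i \<in> A"
  shows "(\<Sum>S\<in>Pow A. if (i \<in> S) = g then c else 0) = 2 ^ (card A - 1) * (c::real)"
proof -
  have "(\<Sum>S\<in>Pow A. if (i \<in> S) = g then c else 0) = (\<Sum>S\<in>{S \<in> Pow A. (i \<in> S) = g}. c)"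
    using assms by (subst sum.inter_filter) auto
  also have "\<dots> = 2 ^ (card A - 1) * c" using card_Pow_mem[OF assms] by simp
  finally show ?thesis .
qed



lemma finite_codes[simp]: "finite (codes n)" by (simp add: codes_def)

lemma sum_two_points:
  assumes "finite A" "x \<in> A" "y \<in> A" "x \<noteq> y"
  shows "(\<Sum>t\<in>A. (if t = x \<or> t = y then c else 0) * h t) = c * (h x + h y :: real)"
proof -
  have "(\<Sum>t\<in>A. (if t = x \<or> t = y then c else 0) * h t) = (\<Sum>t\<in>A. (if t = x then c * h t else 0) + (if t = y then c * h t else 0))"
    using assms(4) by (intro sum.cong) auto
  also have "\<dots> = c * h x + c * h y" using assms by (simp add: sum.distrib)
  finally show ?thesis by (simp add: algebra_simps)
qed

lemma obs_distr:
  assumes "n \<ge> 1" "s \<in> stset n"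
  shows "is_distr (insert 0 (codes n)) (obsf n s)"
proof (cases "sk s = 0")
  case True
  then show ?thesis unfolding is_distr_def obsf_def by simp
next
  case False
  let ?g = "(3 \<le> sk s) = even (sk s)"
  have i: "si s \<in> {..<n}" using assms by (simp add: stset_def)
  have inj: "inj_on code (Pow {..<n})" by (auto simp: inj_on_def code_inj)
  have "(\<Sum>z\<in>codes n. obsf n s z) = (\<Sum>S\<in>Pow {..<n}. obsf n s (code S))"
    unfolding codes_def by (simp add: sum.reindex[OF inj])
  also have "\<dots> = (\<Sum>S\<in>Pow {..<n}. if (si s \<in> S) = ?g then 1/2^n else 0)"
    using False by (intro sum.cong refl) (auto simp: obsf_def codes_def)
  also have "\<dots> = 2 ^ (n - 1) * (1 / 2 ^ n)"
    using sum_Pow_mem[OF _ i, of ?g "1/2^n"] by simp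
  also have "\<dots> = 1/2" using assms(1)
    by (cases n) (auto simp: field_simps)
  finally have "(\<Sum>z\<in>codes n. obsf n s z) = 1/2" .
  then show ?thesis using False unfolding is_distr_def
    by (auto simp: obsf_def)
qed

lemma is_mdp_MM:
  assumes "n \<ge> 1"
  shows "is_mdp (MM n)"
  unfolding is_mdp_def MM_simps
proof (intro conjI)
  show "finite (stset n)" by simp
  have "pe 0 0 \<in> stset n" using assms by simp
  then show "stset n \<noteq> {}" by blast
  show "finite {0::nat, 1}" by simp
  show "finite (insert 0 (codes n))" by (simp add: codes_def)
  show "is_distr (stset n) (initf n)"
    unfolding is_distr_def
  proof (intro conjI allI impI)
    show "(\<Sum>x\<in>stset n. initf n x) = 1" using assms
      by (simp add: sum_stset initf_def)
  qed (auto simp: initf_def)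
  show "\<forall>s a. s \<notin> stset n \<or> a \<notin> {0, 1} \<longrightarrow> Ptrans n s a = None"
    by (auto simp: Ptrans_def)
  show "\<forall>s\<in>stset n. \<forall>a d. Ptrans n s a = Some d \<longrightarrow> is_distr (stset n) d"
  proof (intro ballI allI impI)
    fix s a d assume s: "s \<in> stset n" and P: "Ptrans n s a = Some d"
    then have a: "a \<in> {0,1}" by (auto simp: Ptrans_def split: if_splits)
    have si: "si s < n" using s by (simp add: stset_def)
    show "is_distr (stset n) d"
    proof (cases "sk s = 0")
      case True
      then have d: "d = (\<lambda>t. if t = pe (si s) (1 + 2*a) \<or> t = pe (si s) (2 + 2*a) then 1/2 else 0)"
        using P s a by (auto simp: Ptrans_def)
      have "(\<Sum>t\<in>stset n. (if t = pe (si s) (1 + 2*a) \<or> t = pe (si s) (2 + 2*a) then 1/2 else 0) * (1::real)) = 1/2 * (1 + 1)"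
        by (rule sum_two_points) (use a si in auto)
      then show ?thesis unfolding is_distr_def d using a si by auto
    next
      case False
      then have d: "d = (\<lambda>t. if t = s then 1 else 0)"
        using P s a by (auto simp: Ptrans_def split: if_splits)
      show ?thesis unfolding is_distr_def d using s by auto
    qed
  qed
  show "\<forall>s\<in>stset n. AvAct (MM n) s \<noteq> {}" by (auto simp: AvAct_MM)
  show "\<forall>s\<in>stset n. is_distr (insert 0 (codes n)) (obsf n s)"
    using obs_distr[OF assms] by auto
qed



definition cubept :: "nat \<Rightarrow> (nat \<Rightarrow> real) \<Rightarrow> nat \<Rightarrow> real" where
  "cubept n q s = (if s \<in> stset n \<and> sk s \<noteq> 0 then (if 3 \<le> sk s then q (si s) else 1 - q (si s)) / (2 * real n) else 0)"

lemma initf_pe: "initf n (pe i k) = (if i < n \<and> k = 0 then 1 / real n else 0)"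
  by (auto simp: initf_def)

lemma num_init:
  assumes "j < n" "k < 5"
  shows "(\<Sum>s\<in>stset n. initf n s * (\<Sum>\<alpha>\<in>{0,1}. sch s \<alpha> * Ptr (MM n) s \<alpha> (pe j k) * obsf n (pe j k) 0))
    = (if k = 0 then 0 else if 3 \<le> k then sch (pe j 0) 1 else sch (pe j 0) 0) / (4 * real n)"
proof -
  have "(\<Sum>s\<in>stset n. initf n s * (\<Sum>\<alpha>\<in>{0,1}. sch s \<alpha> * Ptr (MM n) s \<alpha> (pe j k) * obsf n (pe j k) 0))
     = (\<Sum>i<n. (if i = j then (if k = 0 then 0 else if 3 \<le> k then sch (pe j 0) 1 else sch (pe j 0) 0) / (4 * real n) else 0))"
    unfolding sum_stset
  proof (intro sum.cong refl)
    fix i assume "i \<in> {..<n}"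
    then show "initf n (pe i 0) * (\<Sum>\<alpha>\<in>{0, 1}. sch (pe i 0) \<alpha> * Ptr (MM n) (pe i 0) \<alpha> (pe j k) * obsf n (pe j k) 0) +
         initf n (pe i 1) * (\<Sum>\<alpha>\<in>{0, 1}. sch (pe i 1) \<alpha> * Ptr (MM n) (pe i 1) \<alpha> (pe j k) * obsf n (pe j k) 0) +
         initf n (pe i 2) * (\<Sum>\<alpha>\<in>{0, 1}. sch (pe i 2) \<alpha> * Ptr (MM n) (pe i 2) \<alpha> (pe j k) * obsf n (pe j k) 0) +
         initf n (pe i 3) * (\<Sum>\<alpha>\<in>{0, 1}. sch (pe i 3) \<alpha> * Ptr (MM n) (pe i 3) \<alpha> (pe j k) * obsf n (pe j k) 0) +
         initf n (pe i 4) * (\<Sum>\<alpha>\<in>{0, 1}. sch (pe i 4) \<alpha> * Ptr (MM n) (pe i 4) \<alpha> (pe j k) * obsf n (pe j k) 0) =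
         (if i = j then (if k = 0 then 0 else if 3 \<le> k then sch (pe j 0) 1 else sch (pe j 0) 0) / (4 * real n) else 0)"
      using assms by (auto simp: initf_pe Ptr_start obsf_def)
  qed
  also have "\<dots> = (if k = 0 then 0 else if 3 \<le> k then sch (pe j 0) 1 else sch (pe j 0) 0) / (4 * real n)"
    using assms by simp
  finally show ?thesis .
qed

lemma inner_start:
  assumes "i < n" "\<alpha> \<in> {0,1}"
  shows "(\<Sum>t\<in>stset n. Ptr (MM n) (pe i 0) \<alpha> t * obsf n t 0) = 1/2"
proof -
  have "(\<Sum>t\<in>stset n. Ptr (MM n) (pe i 0) \<alpha> t * obsf n t 0)
    = (\<Sum>t\<in>stset n. (if t = pe i (1 + 2*\<alpha>) \<or> t = pe i (2 + 2*\<alpha>) then 1/2 else 0) * obsf n t 0)"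
    using assms by (intro sum.cong refl) (simp add: Ptr_start)
  also have "\<dots> = 1/2 * (obsf n (pe i (1 + 2*\<alpha>)) 0 + obsf n (pe i (2 + 2*\<alpha>)) 0)"
    by (rule sum_two_points) (use assms in auto)
  also have "\<dots> = 1/2" by (simp add: obsf_def)
  finally show ?thesis .
qed

lemma den_init:
  assumes "n \<ge> 1" "\<forall>i<n. sch (pe i 0) 0 + sch (pe i 0) 1 = 1"
  shows "(\<Sum>s\<in>stset n. initf n s * (\<Sum>\<alpha>\<in>{0,1}. sch s \<alpha> * (\<Sum>t\<in>stset n. Ptr (MM n) s \<alpha> t * obsf n t 0))) = 1/2"
proof -
  let ?F = "\<lambda>s. initf n s * (\<Sum>\<alpha>\<in>{0,1}. sch s \<alpha> * (\<Sum>t\<in>stset n. Ptr (MM n) s \<alpha> t * obsf n t 0))"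
  have "sum ?F (stset n) = (\<Sum>i<n. ?F (pe i 0) + ?F (pe i 1) + ?F (pe i 2) + ?F (pe i 3) + ?F (pe i 4))"
    by (rule sum_stset)
  also have "\<dots> = (\<Sum>i<n. 1 / (2 * real n))"
  proof (intro sum.cong refl)
    fix i assume i: "i \<in> {..<n}"
    have sc: "sch (pe i 0) 0 + sch (pe i 0) 1 = 1" using assms i by auto
    have I0: "(\<Sum>t\<in>stset n. Ptr (MM n) (pe i 0) 0 t * obsf n t 0) = 1/2"
      by (rule inner_start) (use i in auto)
    have I1: "(\<Sum>t\<in>stset n. Ptr (MM n) (pe i 0) 1 t * obsf n t 0) = 1/2"
      by (rule inner_start) (use i in auto)
    have I1': "(\<Sum>t\<in>stset n. Ptr (MM n) (pe i 0) (Suc 0) t * obsf n t 0) = 1/2"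
      by (rule inner_start) (use i in auto)
    show "initf n (pe i 0) * (\<Sum>\<alpha>\<in>{0, 1}. sch (pe i 0) \<alpha> * (\<Sum>t\<in>stset n. Ptr (MM n) (pe i 0) \<alpha> t * obsf n t 0)) +
         initf n (pe i 1) * (\<Sum>\<alpha>\<in>{0, 1}. sch (pe i 1) \<alpha> * (\<Sum>t\<in>stset n. Ptr (MM n) (pe i 1) \<alpha> t * obsf n t 0)) +
         initf n (pe i 2) * (\<Sum>\<alpha>\<in>{0, 1}. sch (pe i 2) \<alpha> * (\<Sum>t\<in>stset n. Ptr (MM n) (pe i 2) \<alpha> t * obsf n t 0)) +
         initf n (pe i 3) * (\<Sum>\<alpha>\<in>{0, 1}. sch (pe i 3) \<alpha> * (\<Sum>t\<in>stset n. Ptr (MM n) (pe i 3) \<alpha> t * obsf n t 0)) +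
         initf n (pe i 4) * (\<Sum>\<alpha>\<in>{0, 1}. sch (pe i 4) \<alpha> * (\<Sum>t\<in>stset n. Ptr (MM n) (pe i 4) \<alpha> t * obsf n t 0)) =
         1 / (2 * real n)"
      using i sc apply (simp add: initf_pe I0 I1 I1')
      by (simp add: field_simps)
  qed
  also have "\<dots> = 1/2" using assms(1) by simp
  finally show ?thesis .
qed

definition cube :: "nat \<Rightarrow> (nat \<Rightarrow> real) set" where
  "cube n = {cubept n q | q. \<forall>i<n. 0 \<le> q i \<and> q i \<le> 1}"

lemma update_init:
  assumes "n \<ge> 1" "\<forall>i<n. sch (pe i 0) 0 + sch (pe i 0) 1 = 1"
  shows "(\<lambda>s'. if s' \<in> St (MM n) then
          (\<Sum>s\<in>St (MM n). initf n s * (\<Sum>\<alpha>\<in>Act (MM n). sch s \<alpha> * Ptr (MM n) s \<alpha> s' * obs (MM n) s' 0)) /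
          (\<Sum>s\<in>St (MM n). initf n s * (\<Sum>\<alpha>\<in>Act (MM n). sch s \<alpha> * (\<Sum>s''\<in>St (MM n). Ptr (MM n) s \<alpha> s'' * obs (MM n) s'' 0)))
        else 0) = cubept n (\<lambda>i. sch (pe i 0) 1)"
proof
  fix s'
  show "(if s' \<in> St (MM n) then
          (\<Sum>s\<in>St (MM n). initf n s * (\<Sum>\<alpha>\<in>Act (MM n). sch s \<alpha> * Ptr (MM n) s \<alpha> s' * obs (MM n) s' 0)) /
          (\<Sum>s\<in>St (MM n). initf n s * (\<Sum>\<alpha>\<in>Act (MM n). sch s \<alpha> * (\<Sum>s''\<in>St (MM n). Ptr (MM n) s \<alpha> s'' * obs (MM n) s'' 0)))
        else 0) = cubept n (\<lambda>i. sch (pe i 0) 1) s'"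
  proof (cases "s' \<in> stset n")
    case True
    then have jk: "si s' < n" "sk s' < 5" by (auto simp: stset_def)
    have e: "sch (pe (si s') 0) 0 = 1 - sch (pe (si s') 0) 1" using assms(2) jk by force
    have N: "(\<Sum>s\<in>stset n. initf n s * (\<Sum>\<alpha>\<in>{0,1}. sch s \<alpha> * Ptr (MM n) s \<alpha> s' * obsf n s' 0))
    = (if sk s' = 0 then 0 else if 3 \<le> sk s' then sch (pe (si s') 0) 1 else sch (pe (si s') 0) 0) / (4 * real n)"
      using num_init[OF jk, of sch] by simp
    show ?thesis
      unfolding MM_simps N den_init[OF assms] using True e assms(1)
      by (auto simp: cubept_def field_simps)
  next
    case False
    then show ?thesis by (simp add: cubept_def)
  qed
qed



lemma init_bel_MM: assumes "n \<ge> 1" shows "init_bel (MM n) 0 = initf n"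
proof -
  have e: "initf n s * obsf n s 0 = initf n s" for s by (simp add: initf_def obsf_def)
  have "(\<Sum>s\<in>stset n. initf n s) = 1" using assms by (simp add: sum_stset initf_pe)
  then show ?thesis unfolding init_bel_def MM_simps e by (auto simp: initf_def)
qed

lemma est_up_init: assumes "n \<ge> 1" shows "est_up (MM n) (initf n) 0 = cube n"
proof
  show "est_up (MM n) (initf n) 0 \<subseteq> cube n"
  proof
    fix b assume "b \<in> est_up (MM n) (initf n) 0"
    then obtain sch where sch: "\<forall>s\<in>St (MM n). is_distr (AvAct (MM n) s) (sch s)"
      and b: "b = (\<lambda>s'. if s' \<in> St (MM n) then
          (\<Sum>s\<in>St (MM n). initf n s * (\<Sum>\<alpha>\<in>Act (MM n). sch s \<alpha> * Ptr (MM n) s \<alpha> s' * obs (MM n) s' 0)) /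
          (\<Sum>s\<in>St (MM n). initf n s * (\<Sum>\<alpha>\<in>Act (MM n). sch s \<alpha> * (\<Sum>s''\<in>St (MM n). Ptr (MM n) s \<alpha> s'' * obs (MM n) s'' 0)))
        else 0)" unfolding est_up_def by blast
    have d: "is_distr {0,1} (sch (pe i 0))" if "i < n" for i
    proof -
      have "pe i 0 \<in> stset n" using that by simp
      then have "is_distr (AvAct (MM n) (pe i 0)) (sch (pe i 0))" using sch by simp
      then show ?thesis by (simp add: AvAct_MM that)
    qed
    have s1: "\<forall>i<n. sch (pe i 0) 0 + sch (pe i 0) 1 = 1" using d by (simp add: is_distr_def)
    have "b = cubept n (\<lambda>i. sch (pe i 0) 1)" unfolding b by (rule update_init[OF assms s1])
    moreover have "\<forall>i<n. 0 \<le> sch (pe i 0) 1 \<and> sch (pe i 0) 1 \<le> 1"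
      using d by (auto simp: is_distr_def) (smt (verit))
    ultimately show "b \<in> cube n" unfolding cube_def by blast
  qed
next
  show "cube n \<subseteq> est_up (MM n) (initf n) 0"
  proof
    fix b assume "b \<in> cube n"
    then obtain q where q: "\<forall>i<n. 0 \<le> q i \<and> q i \<le> 1" and b: "b = cubept n q" unfolding cube_def by blast
    define sch :: "nat \<Rightarrow> nat \<Rightarrow> real" where "sch s \<alpha> = (if sk s = 0 then (if \<alpha> = 0 then 1 - q (si s) else if \<alpha> = 1 then q (si s) else 0)
       else (if \<alpha> = 0 then 1 else 0))" for s \<alpha>
    have dist: "\<forall>s\<in>St (MM n). is_distr (AvAct (MM n) s) (sch s)"
      using q by (auto simp: AvAct_MM is_distr_def sch_def stset_def)
    have s1: "\<forall>i<n. sch (pe i 0) 0 + sch (pe i 0) 1 = 1" by (simp add: sch_def)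
    have "b = (\<lambda>s'. if s' \<in> St (MM n) then
          (\<Sum>s\<in>St (MM n). initf n s * (\<Sum>\<alpha>\<in>Act (MM n). sch s \<alpha> * Ptr (MM n) s \<alpha> s' * obs (MM n) s' 0)) /
          (\<Sum>s\<in>St (MM n). initf n s * (\<Sum>\<alpha>\<in>Act (MM n). sch s \<alpha> * (\<Sum>s''\<in>St (MM n). Ptr (MM n) s \<alpha> s'' * obs (MM n) s'' 0)))
        else 0)" unfolding update_init[OF assms s1] b by (simp add: sch_def)
    then show "b \<in> est_up (MM n) (initf n) 0" unfolding est_up_def using dist by blast
  qed
qed

lemma est_MDP_cube: assumes "n \<ge> 1" shows "est_MDP (MM n) [0, 0] = cube n"
  using est_up_init[OF assms] init_bel_MM[OF assms]
  by (simp add: est_up_trace_def est_up_set_def)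



lemma cubept_pe3: "i < n \<Longrightarrow> cubept n q (pe i 3) = q i / (2 * real n)"
  by (simp add: cubept_def)

lemma cubept_eq: "cubept n q = cubept n q' \<longleftrightarrow> (\<forall>i<n. q i = q' i)"
proof
  assume h: "cubept n q = cubept n q'"
  show "\<forall>i<n. q i = q' i"
  proof (intro allI impI)
    fix i assume i: "i < n"
    have "cubept n q (pe i 3) = cubept n q' (pe i 3)" using h by simp
    then show "q i = q' i" using i by (simp add: cubept_pe3)
  qed
next
  assume "\<forall>i<n. q i = q' i"
  then show "cubept n q = cubept n q'" by (auto simp: cubept_def stset_def)
qed

definition corner :: "nat \<Rightarrow> nat set \<Rightarrow> nat \<Rightarrow> real" where
  "corner n S = cubept n (\<lambda>i. if i \<in> S then 1 else 0)"

lemma corner_in_cube: "corner n S \<in> cube n"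
  unfolding corner_def cube_def by (rule CollectI, rule exI[of _ "\<lambda>i. if i \<in> S then 1 else 0"]) simp

lemma corner_inj: "S \<subseteq> {..<n} \<Longrightarrow> T \<subseteq> {..<n} \<Longrightarrow> corner n S = corner n T \<longleftrightarrow> S = T"
  unfolding corner_def cubept_eq by auto

lemma card_corners: "card (corner n ` Pow {..<n}) = 2 ^ n"
proof -
  have "inj_on (corner n) (Pow {..<n})" by (auto simp: inj_on_def corner_inj)
  then show ?thesis by (simp add: card_image card_Pow)
qed

lemma extreme_up:
  fixes u f :: "'a \<Rightarrow> real"
  assumes "finite F" "\<forall>x\<in>F. 0 \<le> u x" "(\<Sum>x\<in>F. u x) = 1" "\<forall>x\<in>F. f x \<le> m"
    "(\<Sum>x\<in>F. u x * f x) = m" "x \<in> F" "0 < u x"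
  shows "f x = m"
proof -
  have "(\<Sum>x\<in>F. u x * (m - f x)) = m * (\<Sum>x\<in>F. u x) - (\<Sum>x\<in>F. u x * f x)"
  proof -
    have "(\<Sum>x\<in>F. u x * (m - f x)) = (\<Sum>x\<in>F. m * u x - u x * f x)"
      by (rule sum.cong) (simp_all add: right_diff_distrib mult.commute)
    also have "\<dots> = m * (\<Sum>x\<in>F. u x) - (\<Sum>x\<in>F. u x * f x)"
      by (simp only: sum_subtractf sum_distrib_left)
    finally show ?thesis .
  qed
  also have "\<dots> = 0" using assms(3,5) by simp
  finally have "(\<Sum>x\<in>F. u x * (m - f x)) = 0" .
  moreover have "\<forall>x\<in>F. 0 \<le> u x * (m - f x)" using assms(2,4) by simp
  ultimately have "\<forall>y\<in>F. u y * (m - f y) = 0"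
    using sum_nonneg_eq_0_iff[OF assms(1), of "\<lambda>y. u y * (m - f y)"] by simp
  then have "u x * (m - f x) = 0" using assms(6) by simp
  then show ?thesis using assms(7) by simp
qed

lemma extreme_down:
  fixes u f :: "'a \<Rightarrow> real"
  assumes "finite F" "\<forall>x\<in>F. 0 \<le> u x" "(\<Sum>x\<in>F. u x) = 1" "\<forall>x\<in>F. m \<le> f x"
    "(\<Sum>x\<in>F. u x * f x) = m" "x \<in> F" "0 < u x"
  shows "f x = m"
proof -
  have "(\<Sum>x\<in>F. u x * (- f x)) = - m" using assms(5) by (simp add: sum_negf)
  moreover have "\<forall>x\<in>F. - f x \<le> - m" using assms(4) by simp
  ultimately have "- f x = - m" using extreme_up[OF assms(1-3), of "\<lambda>x. - f x" "- m" x] assms(6,7) by blast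
  then show ?thesis by simp
qed

lemma corner_vert:
  assumes "S \<subseteq> {..<n}"
  shows "\<not> convex_comb_of (cube n - {corner n S}) (corner n S)"
proof
  assume "convex_comb_of (cube n - {corner n S}) (corner n S)"
  then obtain F u where F: "finite F" "F \<noteq> {}" "F \<subseteq> cube n - {corner n S}" "\<forall>x\<in>F. 0 \<le> u x"
    "(\<Sum>x\<in>F. u x) = 1" and c: "corner n S = (\<lambda>s. \<Sum>x\<in>F. u x * x s)"
    unfolding convex_comb_of_def by blast
  have "\<exists>x\<in>F. 0 < u x"
  proof (rule ccontr)
    assume nc: "\<not> (\<exists>x\<in>F. 0 < u x)"
    have "\<forall>x\<in>F. u x = 0"
    proof
      fix x assume "x \<in> F"
      then have "0 \<le> u x" "\<not> 0 < u x" using F(4) nc by auto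
      then show "u x = 0" by simp
    qed
    then show False using F(5) by simp
  qed
  then obtain x where x: "x \<in> F" "0 < u x" by blast
  have "x \<in> cube n" using x F(3) by auto
  then obtain q where q: "\<forall>i<n. 0 \<le> q i \<and> q i \<le> 1" and xq: "x = cubept n q" unfolding cube_def by blast
  have "q i = (if i \<in> S then 1 else 0)" if i: "i < n" for i
  proof -
    have eq: "(\<Sum>y\<in>F. u y * y (pe i 3)) = corner n S (pe i 3)" using fun_cong[OF c, of "pe i 3"] by simp
    have bnd: "\<forall>y\<in>F. 0 \<le> y (pe i 3) \<and> y (pe i 3) \<le> 1 / (2 * real n)"
    proof
      fix y assume "y \<in> F"
      then have "y \<in> cube n" using F(3) by auto
      then obtain q' where "\<forall>i<n. 0 \<le> q' i \<and> q' i \<le> 1" "y = cubept n q'" unfolding cube_def by blast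
      then show "0 \<le> y (pe i 3) \<and> y (pe i 3) \<le> 1 / (2 * real n)"
        using i by (auto simp: cubept_pe3 divide_right_mono)
    qed
    show ?thesis
    proof (cases "i \<in> S")
      case True
      then have "corner n S (pe i 3) = 1 / (2 * real n)" using i by (simp add: corner_def cubept_pe3)
      then have "x (pe i 3) = 1 / (2 * real n)"
        using extreme_up[OF F(1) F(4) F(5), of "\<lambda>y. y (pe i 3)" "1 / (2 * real n)" x] eq bnd x by auto
      then show ?thesis using True xq i by (simp add: cubept_pe3 field_simps)
    next
      case False
      then have "corner n S (pe i 3) = 0" using i by (simp add: corner_def cubept_pe3)
      then have "x (pe i 3) = 0"
        using extreme_down[OF F(1) F(4) F(5), of 0 "\<lambda>y. y (pe i 3)" x] eq bnd x by auto
      then show ?thesis using False xq i by (simp add: cubept_pe3 field_simps)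
    qed
  qed
  then have "x = corner n S" unfolding xq corner_def cubept_eq by auto
  then show False using x F(3) by auto
qed

lemma noncorner_comb:
  assumes q: "\<forall>i<n. 0 \<le> q i \<and> q i \<le> 1" and j: "j < n" "q j \<noteq> 0" "q j \<noteq> 1"
  shows "convex_comb_of (cube n - {cubept n q}) (cubept n q)"
proof -
  let ?b1 = "cubept n (q(j := 1))" and ?b0 = "cubept n (q(j := 0))"
  have ne1: "?b1 \<noteq> cubept n q" unfolding cubept_eq using j by (intro notI) (drule spec[of _ j], simp)
  have ne0: "?b0 \<noteq> cubept n q" unfolding cubept_eq using j by (intro notI) (drule spec[of _ j], simp)
  have ne: "?b1 \<noteq> ?b0" unfolding cubept_eq using j by (intro notI) (drule spec[of _ j], simp)
  have in1: "?b1 \<in> cube n" and in0: "?b0 \<in> cube n" using q unfolding cube_def by auto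
  define u where "u x = (if x = ?b1 then q j else 1 - q j)" for x
  have u1: "u ?b1 = q j" by (simp add: u_def)
  have u0: "u ?b0 = 1 - q j" using ne by (simp add: u_def)
  have lin: "cubept n q = (\<lambda>s. \<Sum>x\<in>{?b1, ?b0}. u x * x s)"
  proof
    fix s
    have "(\<Sum>x\<in>{?b1, ?b0}. u x * x s) = q j * ?b1 s + (1 - q j) * ?b0 s"
      using ne by (simp add: u1 u0)
    moreover have "cubept n q s = q j * ?b1 s + (1 - q j) * ?b0 s"
      unfolding cubept_def by (cases "si s = j") (simp_all add: algebra_simps add_divide_distrib diff_divide_distrib)
    ultimately show "cubept n q s = (\<Sum>x\<in>{?b1, ?b0}. u x * x s)" by simp
  qed
  have sum1: "(\<Sum>x\<in>{?b1, ?b0}. u x) = 1" using ne by (simp add: u1 u0)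
  have pos: "\<forall>x\<in>{?b1, ?b0}. 0 \<le> u x" using u1 u0 q j by auto
  have sub: "{?b1, ?b0} \<subseteq> cube n - {cubept n q}" using in1 in0 ne1 ne0 by auto
  show ?thesis unfolding convex_comb_of_def
    apply (rule exI[of _ "{?b1, ?b0}"], rule exI[of _ u])
    using lin sum1 pos sub by (intro conjI) (simp_all only: finite.intros insert_not_empty not_False_eq_True)
qed

lemma Vert_cube: assumes "n \<ge> 1" shows "Vert (cube n) = corner n ` Pow {..<n}"
proof
  show "Vert (cube n) \<subseteq> corner n ` Pow {..<n}"
  proof
    fix b assume b: "b \<in> Vert (cube n)"
    then have "b \<in> cube n" and nc: "\<not> convex_comb_of (cube n - {b}) b" unfolding Vert_def by auto
    then obtain q where q: "\<forall>i<n. 0 \<le> q i \<and> q i \<le> 1" and bq: "b = cubept n q" unfolding cube_def by blast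
    have "\<forall>i<n. q i = 0 \<or> q i = 1" using noncorner_comb[OF q] nc bq by blast
    then have "b = corner n {i. i < n \<and> q i = 1}" unfolding bq corner_def cubept_eq by auto
    then show "b \<in> corner n ` Pow {..<n}" by auto
  qed
next
  show "corner n ` Pow {..<n} \<subseteq> Vert (cube n)"
    using corner_vert corner_in_cube unfolding Vert_def by auto
qed



definition rr :: "nat \<Rightarrow> real" where
  "rr s = (if sk s \<noteq> 0 \<and> even (sk s) then 1 else 0)"

definition sigS :: "nat set \<Rightarrow> nat list \<Rightarrow> nat list \<Rightarrow> nat \<Rightarrow> real" where
  "sigS S ss as a = (if sk (last ss) = 0 then (if a = (if si (last ss) \<in> S then 1 else 0) then 1 else 0)
     else (if a = 0 then 1 else 0))"

lemma sched_sigS: "is_scheduler (MM n) (sigS S)"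
  unfolding is_scheduler_def
proof (intro allI impI)
  fix ss as assume "is_path (MM n) ss as"
  then have "last ss \<in> stset n" unfolding is_path_def by auto
  then show "is_distr (AvAct (MM n) (last ss)) (sigS S ss as)"
    by (auto simp: AvAct_MM is_distr_def sigS_def)
qed

lemma path_prob_3: "path_prob M \<sigma> [s0, s1, s2] [a0, a1] =
   init M s0 * ((\<sigma> [s0] [] a0 * Ptr M s0 a0 s1) * (\<sigma> [s0, s1] [a0] a1 * Ptr M s1 a1 s2))"
  by (simp add: path_prob_def numeral_2_eq_2)

lemma tgp_3: "trace_given_path M [z0, z1, z2] [s0, s1, s2] = obs M s0 z0 * (obs M s1 z1 * obs M s2 z2)"
  by (simp add: trace_given_path_def numeral_3_eq_3)

lemma good_paths:
  assumes S: "S \<subseteq> {..<n}" and p: "(ss, as) \<in> Paths (MM n) [0, 0, code S]"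
  shows "path_prob (MM n) (sigS S) ss as * trace_given_path (MM n) [0, 0, code S] ss * rr (last ss)
     = path_prob (MM n) (sigS S) ss as * trace_given_path (MM n) [0, 0, code S] ss"
proof -
  have pa: "is_path (MM n) ss as" and l: "length ss = 3" using p unfolding Paths_def by auto
  then have la: "length as = 2" unfolding is_path_def by simp
  obtain s0 s1 s2 where ss: "ss = [s0, s1, s2]" using l
    by (auto simp: numeral_3_eq_3 length_Suc_conv)
  obtain a0 a1 where as: "as = [a0, a1]" using la
    by (auto simp: numeral_2_eq_2 length_Suc_conv)
  have i0: "0 < initf n s0" using pa unfolding is_path_def ss by simp
  then have s0: "s0 \<in> stset n" "sk s0 = 0" by (auto simp: initf_def split: if_splits)
  define i where "i = si s0"
  have s0e: "s0 = pe i 0" using s0 unfolding i_def by (metis pe_si_sk)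
  have iln: "i < n" using s0 s0e by simp
  have t1: "0 < Ptr (MM n) s0 a0 s1" and t2: "0 < Ptr (MM n) s1 a1 s2"
    using pa unfolding is_path_def ss as by (auto simp: nth_Cons')
  from t1 have a0: "a0 \<in> {0,1}" and s1: "s1 = pe i (1 + 2*a0) \<or> s1 = pe i (2 + 2*a0)"
    unfolding s0e Ptr_start by (auto split: if_splits)
  define k where "k = sk s1"
  have k0: "k \<noteq> 0" using s1 a0 unfolding k_def by auto
  have s1e: "s1 = pe i k" using s1 unfolding k_def by auto
  from t2 have a1: "a1 = 0" and s2: "s2 = s1"
    unfolding s1e Ptr_other[OF k0] by (auto split: if_splits)
  show ?thesis
  proof (cases "a0 = (if i \<in> S then 1 else 0)")
    case False
    then have "sigS S [s0] [] a0 = 0" using s0 unfolding sigS_def i_def by auto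
    then show ?thesis unfolding ss as path_prob_3 by simp
  next
    case True
    show ?thesis
    proof (cases "s1 = pe i (2 + 2*a0)")
      case True
      then have "rr (last ss) = 1" unfolding ss s2 rr_def by simp
      then show ?thesis by simp
    next
      case False
      then have s1o: "s1 = pe i (1 + 2*a0)" using s1 by auto
      have "obsf n s2 (code S) = 0"
        using S True a0 unfolding s2 s1o by (auto simp: obsf_def codes_def)
      then show ?thesis unfolding ss tgp_3 by simp
    qed
  qed
qed

lemma trace_pos:
  assumes n: "n \<ge> 1" and S: "S \<subseteq> {..<n}"
  shows "0 < trace_prob (MM n) (sigS S) [0, 0, code S]"
proof -
  define b :: nat where "b = (if 0 \<in> S then 1 else 0)"
  let ?ss = "[pe 0 0, pe 0 (2 + 2*b), pe 0 (2 + 2*b)]" and ?as = "[b, 0]"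
  have b: "b \<in> {0,1}" unfolding b_def by auto
  have path: "is_path (MM n) ?ss ?as"
    unfolding is_path_def using n b
    by (auto simp: initf_pe Ptr_start Ptr_other nth_Cons' Ptrans_def less_Suc_eq)
  have inP: "(?ss, ?as) \<in> Paths (MM n) [0, 0, code S]" using path unfolding Paths_def by simp
  have cS: "code S \<in> codes n" using S unfolding codes_def by auto
  have o: "obsf n (pe 0 (2 + 2*b)) (code S) = 1 / 2 ^ n"
    using S cS b unfolding obsf_def b_def by auto
  have "0 < path_prob (MM n) (sigS S) ?ss ?as * trace_given_path (MM n) [0, 0, code S] ?ss"
    unfolding path_prob_3 tgp_3 using n b o
    by (auto simp: initf_pe Ptr_start Ptr_other sigS_def b_def obsf_def)
  moreover have "\<forall>p\<in>Paths (MM n) [0, 0, code S]. 0 \<le> (case p of (ss, as) \<Rightarrow>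
      path_prob (MM n) (sigS S) ss as * trace_given_path (MM n) [0, 0, code S] ss)"
    using weights_nonneg[OF is_mdp_MM[OF n] sched_sigS] by auto
  ultimately show ?thesis unfolding trace_prob_def
    by (intro sum_pos2[OF finite_Paths[OF is_mdp_MM[OF n]] inP]) auto
qed

lemma Risk_ge:
  assumes n: "n \<ge> 1" and S: "S \<subseteq> {..<n}"
  shows "1 \<le> Risk (MM n) rr [0, 0, code S]"
  by (rule Risk_ge1[OF is_mdp_MM[OF n] _ sched_sigS])
     (use good_paths[OF S] trace_pos[OF n S] in \<open>auto simp: rr_def\<close>)



lemma corner_pe: "i < n \<Longrightarrow> corner n T (pe i k) = (if k = 0 \<or> 5 \<le> k then 0 else if 3 \<le> k then (if i \<in> T then 1 else 0) else (if i \<in> T then 0 else 1)) / (2 * real n)"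
  by (simp add: corner_def cubept_def)

lemma corner_start: "sk s = 0 \<Longrightarrow> corner n T s = 0"
  by (simp add: corner_def cubept_def)

lemma obs_code: "S \<subseteq> {..<n} \<Longrightarrow> obsf n (pe i k) (code S) = (if k = 0 then 0 else if ((i \<in> S) = (3 \<le> k)) = even k then 1/2^n else 0)"
  by (simp add: obsf_def codes_def)

lemma Ptr_nonstart:
  assumes "s \<in> stset n" "sk s \<noteq> 0"
  shows "Ptr (MM n) s \<alpha> t = (if \<alpha> = 0 \<and> t = s then 1 else 0)"
  using Ptr_other[OF assms(2), of n "si s" \<alpha> t] assms by (simp add: stset_def)

lemma upd_num:
  assumes sch: "\<forall>s\<in>stset n. is_distr (AvAct (MM n) s) (sch s)" and s': "s' \<in> stset n"
  shows "(\<Sum>s\<in>stset n. corner n T s * (\<Sum>\<alpha>\<in>{0,1}. sch s \<alpha> * Ptr (MM n) s \<alpha> s' * obsf n s' z))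
     = corner n T s' * obsf n s' z"
proof -
  have "(\<Sum>s\<in>stset n. corner n T s * (\<Sum>\<alpha>\<in>{0,1}. sch s \<alpha> * Ptr (MM n) s \<alpha> s' * obsf n s' z))
      = (\<Sum>s\<in>stset n. if s = s' then corner n T s * obsf n s' z else 0)"
  proof (rule sum.cong[OF refl])
    fix s assume s: "s \<in> stset n"
    show "corner n T s * (\<Sum>\<alpha>\<in>{0,1}. sch s \<alpha> * Ptr (MM n) s \<alpha> s' * obsf n s' z)
        = (if s = s' then corner n T s * obsf n s' z else 0)"
    proof (cases "sk s = 0")
      case True
      then have "corner n T s = 0" by (simp add: corner_start)
      then show ?thesis by auto
    next
      case False
      have "is_distr {0} (sch s)" using sch s False by (auto simp: AvAct_MM)
      then have "sch s 0 = 1" by (simp add: is_distr_def)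
      then show ?thesis using Ptr_nonstart[OF s False] by auto
    qed
  qed
  also have "\<dots> = corner n T s' * obsf n s' z" using s' by simp
  finally show ?thesis .
qed

lemma upd_den:
  assumes sch: "\<forall>s\<in>stset n. is_distr (AvAct (MM n) s) (sch s)"
  shows "(\<Sum>s\<in>stset n. corner n T s * (\<Sum>\<alpha>\<in>{0,1}. sch s \<alpha> * (\<Sum>t\<in>stset n. Ptr (MM n) s \<alpha> t * obsf n t z)))
     = (\<Sum>s\<in>stset n. corner n T s * obsf n s z)"
proof (rule sum.cong[OF refl])
  fix s assume s: "s \<in> stset n"
  show "corner n T s * (\<Sum>\<alpha>\<in>{0,1}. sch s \<alpha> * (\<Sum>t\<in>stset n. Ptr (MM n) s \<alpha> t * obsf n t z))
      = corner n T s * obsf n s z"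
  proof (cases "sk s = 0")
    case True
    then show ?thesis by (simp add: corner_start)
  next
    case False
    have "is_distr {0} (sch s)" using sch s False by (auto simp: AvAct_MM)
    then have "sch s 0 = 1" by (simp add: is_distr_def)
    moreover have "(\<Sum>t\<in>stset n. Ptr (MM n) s 0 t * obsf n t z) = obsf n s z"
    proof -
      have "(\<Sum>t\<in>stset n. Ptr (MM n) s 0 t * obsf n t z) = (\<Sum>t\<in>stset n. if t = s then obsf n t z else 0)"
        by (intro sum.cong refl) (simp add: Ptr_nonstart[OF s False])
      also have "\<dots> = obsf n s z" using s by simp
      finally show ?thesis .
    qed
    moreover have "(\<Sum>t\<in>stset n. Ptr (MM n) s 1 t * obsf n t z) = 0"
      by (simp add: Ptr_nonstart[OF s False])
    ultimately show ?thesis by simp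
  qed
qed

definition agree :: "nat \<Rightarrow> nat set \<Rightarrow> nat set \<Rightarrow> real" where
  "agree n S T = (\<Sum>i<n. if (i \<in> T) = (i \<in> S) then 1 else 0)"

lemma D0_val:
  assumes n: "n \<ge> 1" and S: "S \<subseteq> {..<n}"
  shows "(\<Sum>s\<in>stset n. corner n T s * obsf n s (code S)) = 1 / (2 * 2^n)"
proof -
  have "(\<Sum>s\<in>stset n. corner n T s * obsf n s (code S)) = (\<Sum>i<n. 1 / (2 * real n * 2^n))"
    unfolding sum_stset
    by (intro sum.cong refl) (auto simp: corner_pe obs_code[OF S])
  also have "\<dots> = 1 / (2 * 2^n)" using n by simp
  finally show ?thesis .
qed

lemma NR_val:
  assumes n: "n \<ge> 1" and S: "S \<subseteq> {..<n}"
  shows "(\<Sum>s\<in>stset n. corner n T s * obsf n s (code S) * rr s) = agree n S T / (2 * real n * 2^n)"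
proof -
  have "(\<Sum>s\<in>stset n. corner n T s * obsf n s (code S) * rr s) = (\<Sum>i<n. (if (i \<in> T) = (i \<in> S) then 1 else 0) / (2 * real n * 2^n))"
    unfolding sum_stset
    by (intro sum.cong refl) (auto simp: corner_pe obs_code[OF S] rr_def)
  also have "\<dots> = agree n S T / (2 * real n * 2^n)"
    unfolding agree_def sum_divide_distrib by simp
  finally show ?thesis .
qed

lemma agree_le:
  assumes S: "S \<subseteq> {..<n}" and T: "T \<subseteq> {..<n}" and ne: "T \<noteq> S"
  shows "agree n S T \<le> real n - 1"
proof -
  obtain j where j: "j < n" "(j \<in> T) \<noteq> (j \<in> S)" using S T ne by blast
  have "agree n S T = (\<Sum>i\<in>{..<n} - {j}. if (i \<in> T) = (i \<in> S) then 1 else 0) + (if (j \<in> T) = (j \<in> S) then 1 else 0)"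
    unfolding agree_def using j by (subst sum.remove[of _ j]) auto
  also have "\<dots> \<le> (\<Sum>i\<in>{..<n} - {j}. 1)"
  proof -
    have A: "(\<Sum>i\<in>{..<n} - {j}. if (i \<in> T) = (i \<in> S) then 1 else 0) \<le> (\<Sum>i\<in>{..<n} - {j}. (1::real))"
      by (rule sum_mono) auto
    have B: "(if (j \<in> T) = (j \<in> S) then 1 else 0) = (0::real)" using j by simp
    show ?thesis using A B by linarith
  qed
  also have "\<dots> = real n - 1" using j by simp
  finally show ?thesis by simp
qed

lemma exp_other:
  assumes n: "n \<ge> 1" and S: "S \<subseteq> {..<n}" and T: "T \<subseteq> {..<n}" and ne: "T \<noteq> S"
    and b: "b \<in> est_up (MM n) (corner n T) (code S)"
  shows "exp_risk (MM n) rr b \<le> (real n - 1) / real n"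
proof -
  obtain sch where sch: "\<forall>s\<in>stset n. is_distr (AvAct (MM n) s) (sch s)"
    and bdef: "b = (\<lambda>s'. if s' \<in> stset n then
          (\<Sum>s\<in>stset n. corner n T s * (\<Sum>\<alpha>\<in>{0,1}. sch s \<alpha> * Ptr (MM n) s \<alpha> s' * obsf n s' (code S))) /
          (\<Sum>s\<in>stset n. corner n T s * (\<Sum>\<alpha>\<in>{0,1}. sch s \<alpha> * (\<Sum>s''\<in>stset n. Ptr (MM n) s \<alpha> s'' * obsf n s'' (code S))))
        else 0)" using b unfolding est_up_def MM_simps by blast
  have bs: "b s = corner n T s * obsf n s (code S) / (1 / (2 * 2^n))" if "s \<in> stset n" for s
    using that unfolding bdef upd_num[OF sch that] upd_den[OF sch] D0_val[OF n S] by simp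
  have "exp_risk (MM n) rr b = (\<Sum>s\<in>stset n. corner n T s * obsf n s (code S) * rr s) * (2 * 2^n)"
    unfolding exp_risk_def MM_simps sum_distrib_right
    by (intro sum.cong refl) (simp add: bs)
  also have "\<dots> = agree n S T / real n" unfolding NR_val[OF n S] using n by (simp add: field_simps)
  also have "\<dots> \<le> (real n - 1) / real n" using agree_le[OF S T ne] by (simp add: divide_right_mono)
  finally show ?thesis .
qed



lemma est_up_nonempty: "est_up (MM n) b z \<noteq> {}"
proof -
  define sch :: "nat \<Rightarrow> nat \<Rightarrow> real" where "sch s \<alpha> = (if \<alpha> = 0 then 1 else 0)" for s \<alpha>
  have "\<forall>s\<in>St (MM n). is_distr (AvAct (MM n) s) (sch s)"
    by (auto simp: AvAct_MM is_distr_def sch_def)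
  then show ?thesis unfolding est_up_def by blast
qed

theorem theorem3:
  shows "\<exists>M :: nat \<Rightarrow> mdp. \<forall>n \<ge> 1. is_mdp (M n) \<and>
    (\<exists>\<tau> r. \<tau> \<noteq> [] \<and> set \<tau> \<subseteq> Obs (M n) \<and> (\<forall>s\<in>St (M n). r s \<ge> 0) \<and>
       (let B = Vert (est_MDP (M n) \<tau>) in
          card B = 2 ^ n \<and>
          (\<forall>bel\<in>B. \<exists>\<tau>'. \<tau>' \<noteq> [] \<and> set \<tau>' \<subseteq> Obs (M n) \<and>
              Risk (M n) r (\<tau> @ \<tau>') >
              Sup (exp_risk (M n) r ` est_up_trace (M n) (B - {bel}) \<tau>'))))"
proof (intro exI[of _ MM] allI impI conjI)
  fix n :: nat assume n: "n \<ge> 1"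
  show "is_mdp (MM n)" by (rule is_mdp_MM[OF n])
  have B: "Vert (est_MDP (MM n) [0, 0]) = corner n ` Pow {..<n}"
    using est_MDP_cube[OF n] Vert_cube[OF n] by simp
  show "\<exists>\<tau> r. \<tau> \<noteq> [] \<and> set \<tau> \<subseteq> Obs (MM n) \<and> (\<forall>s\<in>St (MM n). r s \<ge> 0) \<and>
       (let B = Vert (est_MDP (MM n) \<tau>) in
          card B = 2 ^ n \<and>
          (\<forall>bel\<in>B. \<exists>\<tau>'. \<tau>' \<noteq> [] \<and> set \<tau>' \<subseteq> Obs (MM n) \<and>
              Risk (MM n) r (\<tau> @ \<tau>') >
              Sup (exp_risk (MM n) r ` est_up_trace (MM n) (B - {bel}) \<tau>')))"
  proof (intro exI[of _ "[0, 0]"] exI[of _ rr] conjI)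
    show "[0::nat, 0] \<noteq> []" by simp
    show "set [0::nat, 0] \<subseteq> Obs (MM n)" by simp
    show "\<forall>s\<in>St (MM n). rr s \<ge> 0" by (simp add: rr_def)
    show "let B = Vert (est_MDP (MM n) [0, 0]) in
          card B = 2 ^ n \<and>
          (\<forall>bel\<in>B. \<exists>\<tau>'. \<tau>' \<noteq> [] \<and> set \<tau>' \<subseteq> Obs (MM n) \<and>
              Risk (MM n) rr ([0, 0] @ \<tau>') >
              Sup (exp_risk (MM n) rr ` est_up_trace (MM n) (B - {bel}) \<tau>'))"
      unfolding Let_def B
    proof (intro conjI ballI)
      show "card (corner n ` Pow {..<n}) = 2 ^ n" by (rule card_corners)
      fix bel assume "bel \<in> corner n ` Pow {..<n}"
      then obtain S where S: "S \<subseteq> {..<n}" and bel: "bel = corner n S" by auto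
      let ?X = "est_up_trace (MM n) (corner n ` Pow {..<n} - {bel}) [code S]"
      have X: "?X = (\<Union>b\<in>corner n ` Pow {..<n} - {bel}. est_up (MM n) b (code S))"
        by (simp add: est_up_trace_def est_up_set_def)
      have bound: "\<forall>x\<in>?X. exp_risk (MM n) rr x \<le> (real n - 1) / real n"
      proof
        fix x assume "x \<in> ?X"
        then obtain T where T: "T \<subseteq> {..<n}" "corner n T \<noteq> bel" and x: "x \<in> est_up (MM n) (corner n T) (code S)"
          unfolding X by auto
        have "T \<noteq> S" using T bel by auto
        then show "exp_risk (MM n) rr x \<le> (real n - 1) / real n"
          by (rule exp_other[OF n S T(1) _ x])
      qed
      define T0 where "T0 = (if 0 \<in> S then S - {0} else insert 0 S)"
      have T0: "T0 \<subseteq> {..<n}" "T0 \<noteq> S" using S n unfolding T0_def by auto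
      then have "corner n T0 \<noteq> bel" unfolding bel using corner_inj[OF T0(1) S] by simp
      then have "corner n T0 \<in> corner n ` Pow {..<n} - {bel}" using T0 by auto
      then have Xne: "?X \<noteq> {}" unfolding X using est_up_nonempty[of n "corner n T0" "code S"] by blast
      have "Sup (exp_risk (MM n) rr ` ?X) \<le> (real n - 1) / real n"
        by (rule cSup_least) (use Xne bound in auto)
      also have "\<dots> < 1" using n by simp
      also have "1 \<le> Risk (MM n) rr ([0, 0] @ [code S])" using Risk_ge[OF n S] by simp
      finally have "Sup (exp_risk (MM n) rr ` ?X) < Risk (MM n) rr ([0, 0] @ [code S])" .
      moreover have "set [code S] \<subseteq> Obs (MM n)" using S by (simp add: codes_def)
      ultimately show "\<exists>\<tau>'. \<tau>' \<noteq> [] \<and> set \<tau>' \<subseteq> Obs (MM n) \<and>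
              Risk (MM n) rr ([0, 0] @ \<tau>') >
              Sup (exp_risk (MM n) rr ` est_up_trace (MM n) (corner n ` Pow {..<n} - {bel}) \<tau>')"
        by (intro exI[of _ "[code S]"]) auto
    qed
  qed
qed


end
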